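(* For $n\ge0$ let $N=2n+1$ and let $\#^{[N]}(t)$ be the number of particles at time $t$ of the ternary coalescent started from $N$ particles of mass $1$. For every $t>0$, as $n\to\infty$, $$\frac{\#^{[N]}(t/N^{3/2})}{\sqrt N}\to\frac1t\quad\text{in probability}.$$
   Context: The ternary coalescent is the continuous-time Markov jump process on finite nonincreasing sequences of positive reals (particle masses) in which each (unordered) triple of distinct particles with masses $a,b,c$ merges into one particle of mass $a+b+c$ at rate $a+b+c+3$. *)

theory Defs
  imports "HOL-Probability.Probability"
begin

text \<open>States of the ternary coalescent: finite nonincreasing lists of particle masses.
  Particles are the positions 0..length x - 1 of the list.\<close>

definition triples :: "real list \<Rightarrow> nat set set" where
  "triples x = {T. T \<subseteq> {..<length x} \<and> card T = 3}"

definition tmass :: "real list \<Rightarrow> nat set \<Rightarrow> real" where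
  "tmass x T = (\<Sum>i\<in>T. x ! i)"

definition trate :: "real list \<Rightarrow> nat set \<Rightarrow> real" where
  "trate x T = tmass x T + 3"

definition total_rate :: "real list \<Rightarrow> real" where
  "total_rate x = (\<Sum>T\<in>triples x. trate x T)"

definition merge :: "real list \<Rightarrow> nat set \<Rightarrow> real list" where
  "merge x T = rev (sort (tmass x T # [x ! i. i \<leftarrow> [0..<length x], i \<notin> T]))"

definition jump :: "real list \<Rightarrow> real list pmf" where
  "jump x = map_pmf (merge x)
     (embed_pmf (\<lambda>T. if T \<in> triples x then trate x T / total_rate x else 0))"

text \<open>Law at time s of the ternary coalescent started from x, built by the
  jump-and-hold construction of the continuous-time Markov jump process: hold an
  Exp(total_rate x) time h; if h > s the state at time s is x, otherwise jump
  according to the jump chain and run for the remaining time s - h.  The first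
  argument is a bound on the number of remaining jumps (each jump lowers the
  number of particles by 2, and with fewer than 3 particles the state is absorbing),
  so starting with fuel = length x the recursion is exact.\<close>
primrec coal_law_fuel :: "nat \<Rightarrow> real list \<Rightarrow> real \<Rightarrow> real list measure" where
  "coal_law_fuel 0 x s = return (count_space UNIV) x"
| "coal_law_fuel (Suc k) x s =
     (if length x < 3 then return (count_space UNIV) x
      else density lborel (exponential_density (total_rate x)) \<bind>
        (\<lambda>h. if s < h then return (count_space UNIV) x
             else measure_pmf (jump x) \<bind> (\<lambda>y. coal_law_fuel k y (s - h))))"

definition coal_law :: "real list \<Rightarrow> real \<Rightarrow> real list measure" where
  "coal_law x s = coal_law_fuel (length x) x s"

definition coal_from_units :: "nat \<Rightarrow> real \<Rightarrow> real list measure" where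
  "coal_from_units N s = coal_law (replicate N 1) s"

end

theory Submission
  imports Defs "HOL-Real_Asymp.Real_Asymp"
begin

definition Rt :: "real \<Rightarrow> nat \<Rightarrow> real" where
  "Rt M L = real ((L-1) choose 2) * M + 3 * real (L choose 3)"

lemma choose2_real: "real (n choose 2) = real n * (real n - 1) / 2"
proof (induction n)
  case 0 then show ?case by simp
next
  case (Suc n)
  have "Suc n choose 2 = (n choose 1) + (n choose 2)"
    by (metis Suc_1 binomial_Suc_Suc)
  then show ?case using Suc by (simp add: field_simps)
qed

lemma choose3_real: "real (n choose 3) = real n * (real n - 1) * (real n - 2) / 6"
proof (induction n)
  case 0 then show ?case by simp
next
  case (Suc n)
  have e: "(3::nat) = Suc 2" by simp
  have "Suc n choose 3 = (n choose 2) + (n choose 3)"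
    unfolding e by (rule binomial_Suc_Suc)
  then show ?case using Suc choose2_real[of n] by (simp add: field_simps)
qed

lemma Rt_formula: assumes "L \<ge> 1" shows "Rt M L = (real L - 1) * (real L - 2) * (M + real L) / 2"
  using assms unfolding Rt_def choose2_real choose3_real by (simp add: of_nat_diff field_simps)

lemma card_triples: "card (triples x) = length x choose 3"
  unfolding triples_def using n_subsets[of "{..<length x}" 3] by simp

lemma finite_triples: "finite (triples x)"
  unfolding triples_def by (rule finite_subset[of _ "Pow {..<length x}"]) auto

lemma card_triples_with:
  assumes i: "i < L"
  shows "card {T. T \<subseteq> {..<L} \<and> card T = 3 \<and> i \<in> T} = (L - 1) choose 2"
proof -
  have fin: "finite ({..<L} - {i})" by simp
  have "{T. T \<subseteq> {..<L} \<and> card T = 3 \<and> i \<in> T} = insert i ` {B. B \<subseteq> {..<L} - {i} \<and> card B = 2}"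
  proof (intro set_eqI iffI)
    fix T assume T: "T \<in> {T. T \<subseteq> {..<L} \<and> card T = 3 \<and> i \<in> T}"
    then have "finite T" using finite_subset[of T "{..<L}"] by auto
    then have "T - {i} \<in> {B. B \<subseteq> {..<L} - {i} \<and> card B = 2}" using T by auto
    moreover have "T = insert i (T - {i})" using T by auto
    ultimately show "T \<in> insert i ` {B. B \<subseteq> {..<L} - {i} \<and> card B = 2}" by blast
  next
    fix T assume "T \<in> insert i ` {B. B \<subseteq> {..<L} - {i} \<and> card B = 2}"
    then obtain B where B: "B \<subseteq> {..<L} - {i}" "card B = 2" "T = insert i B" by auto
    then have "finite B" using finite_subset[OF B(1) fin] by auto
    moreover have "i \<notin> B" using B by auto
    ultimately show "T \<in> {T. T \<subseteq> {..<L} \<and> card T = 3 \<and> i \<in> T}" using B i by auto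
  qed
  moreover have "inj_on (insert i) {B. B \<subseteq> {..<L} - {i} \<and> card B = 2}"
    unfolding inj_on_def by blast
  ultimately have "card {T. T \<subseteq> {..<L} \<and> card T = 3 \<and> i \<in> T} = card {B. B \<subseteq> {..<L} - {i} \<and> card B = 2}"
    by (simp add: card_image)
  also have "\<dots> = card ({..<L} - {i}) choose 2" by (rule n_subsets[OF fin])
  also have "card ({..<L} - {i}) = L - 1" using i by simp
  finally show ?thesis .
qed

lemma total_rate_formula: "total_rate x = Rt (sum_list x) (length x)"
proof -
  let ?L = "length x"
  have "total_rate x = (\<Sum>T\<in>triples x. tmass x T) + 3 * real (card (triples x))"
    unfolding total_rate_def trate_def by (simp add: sum.distrib)
  also have "(\<Sum>T\<in>triples x. tmass x T) = (\<Sum>T\<in>triples x. \<Sum>i<?L. (if i \<in> T then x ! i else 0))"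
    unfolding tmass_def
  proof (rule sum.cong[OF refl])
    fix T assume "T \<in> triples x"
    then have "T \<subseteq> {..<?L}" by (simp add: triples_def)
    then have "{..<?L} \<inter> T = T" by auto
    then show "(\<Sum>i\<in>T. x ! i) = (\<Sum>i<?L. (if i \<in> T then x ! i else 0))"
      using sum.inter_restrict[of "{..<?L}" "\<lambda>i. x ! i" T] by simp
  qed
  also have "\<dots> = (\<Sum>i<?L. \<Sum>T\<in>triples x. (if i \<in> T then x ! i else 0))"
    by (rule sum.swap)
  also have "\<dots> = (\<Sum>i<?L. x ! i * real ((?L - 1) choose 2))"
  proof (intro sum.cong refl)
    fix i assume i: "i \<in> {..<?L}"
    have "(\<Sum>T\<in>triples x. (if i \<in> T then x ! i else 0)) = (\<Sum>T\<in>{T\<in>triples x. i \<in> T}. x ! i)"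
      using finite_triples[of x] sum.inter_filter[of "triples x" "\<lambda>T. x ! i" "\<lambda>T. i \<in> T"] by simp
    also have "{T\<in>triples x. i \<in> T} = {T. T \<subseteq> {..<?L} \<and> card T = 3 \<and> i \<in> T}"
      unfolding triples_def by auto
    finally show "(\<Sum>T\<in>triples x. (if i \<in> T then x ! i else 0)) = x ! i * real ((?L - 1) choose 2)"
      using card_triples_with[of i ?L] i by simp
  qed
  also have "\<dots> = sum_list x * real ((?L - 1) choose 2)"
    by (simp add: sum_list_sum_nth sum_distrib_right atLeast0LessThan)
  finally show ?thesis unfolding Rt_def card_triples by simp
qed

definition good :: "real list \<Rightarrow> bool" where "good x \<longleftrightarrow> (\<forall>v\<in>set x. 0 < v)"

lemma tmass_pos: assumes "good x" "T \<in> triples x" shows "0 < tmass x T"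
proof -
  have T: "T \<subseteq> {..<length x}" "card T = 3" using assms(2) by (auto simp: triples_def)
  then have "finite T" "T \<noteq> {}" by (auto intro: finite_subset)
  moreover have "\<And>i. i \<in> T \<Longrightarrow> 0 < x ! i" using T(1) assms(1) by (auto simp: good_def)
  ultimately show ?thesis unfolding tmass_def by (intro sum_pos) auto
qed

lemma comp_eq: "[f i. i \<leftarrow> xs, P i] = map f (filter P xs)"
  by (induction xs) auto

lemma rest_list:
  assumes "T \<subseteq> {..<length x}"
  shows "length [x ! i. i \<leftarrow> [0..<length x], i \<notin> T] = length x - card T"
    and "sum_list [x ! i. i \<leftarrow> [0..<length x], i \<notin> T] = (\<Sum>i\<in>{..<length x} - T. x ! i)"
    and "set [x ! i. i \<leftarrow> [0..<length x], i \<notin> T] = (\<lambda>i. x ! i) ` ({..<length x} - T)"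
proof -
  have fin: "finite T" using assms by (rule finite_subset) simp
  have d: "distinct (filter (\<lambda>i. i \<notin> T) [0..<length x])" by simp
  have s: "set (filter (\<lambda>i. i \<notin> T) [0..<length x]) = {..<length x} - T" by auto
  have "length [x ! i. i \<leftarrow> [0..<length x], i \<notin> T] = length (filter (\<lambda>i. i \<notin> T) [0..<length x])"
    by (simp add: comp_eq)
  also have "\<dots> = card ({..<length x} - T)" using distinct_card[OF d] s by simp
  also have "\<dots> = length x - card T" using assms fin by (simp add: card_Diff_subset)
  finally show "length [x ! i. i \<leftarrow> [0..<length x], i \<notin> T] = length x - card T" .
  show "sum_list [x ! i. i \<leftarrow> [0..<length x], i \<notin> T] = (\<Sum>i\<in>{..<length x} - T. x ! i)"
    using sum_list_distinct_conv_sum_set[OF d, of "\<lambda>i. x ! i"] s by (simp add: comp_eq)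
  show "set [x ! i. i \<leftarrow> [0..<length x], i \<notin> T] = (\<lambda>i. x ! i) ` ({..<length x} - T)"
    using s by (simp add: comp_eq)
qed

lemma merge_props:
  assumes g: "good x" and T: "T \<in> triples x"
  shows "length (merge x T) = length x - 2" "sum_list (merge x T) = sum_list x" "good (merge x T)"
proof -
  have Ts: "T \<subseteq> {..<length x}" "card T = 3" using T by (auto simp: triples_def)
  have fin: "finite T" using Ts(1) by (rule finite_subset) simp
  have "length x \<ge> 3" using card_mono[OF _ Ts(1)] Ts(2) by simp
  then show "length (merge x T) = length x - 2" unfolding merge_def using rest_list(1)[OF Ts(1)] Ts(2) by simp
  have "sum_list (merge x T) = tmass x T + (\<Sum>i\<in>{..<length x} - T. x ! i)"
    unfolding merge_def sum_list_rev using rest_list(2)[OF Ts(1)]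
    by (simp flip: sum_mset_sum_list)
  also have "\<dots> = (\<Sum>i<length x. x ! i)" unfolding tmass_def
    using sum.subset_diff[of T "{..<length x}" "\<lambda>i. x ! i"] Ts(1) by simp
  also have "\<dots> = sum_list x" by (simp add: sum_list_sum_nth atLeast0LessThan)
  finally show "sum_list (merge x T) = sum_list x" .
  have "set (merge x T) = insert (tmass x T) ((\<lambda>i. x ! i) ` ({..<length x} - T))"
    unfolding merge_def set_rev set_sort using rest_list(3)[OF Ts(1)] by simp
  then show "good (merge x T)" using tmass_pos[OF g T] g by (auto simp: good_def)
qed

lemma total_rate_pos: assumes "good x" "length x \<ge> 3" shows "0 < total_rate x"
proof -
  have "0 \<le> sum_list x" using assms(1) unfolding good_def by (intro sum_list_nonneg) auto
  then show ?thesis using assms(2) unfolding total_rate_formula by (subst Rt_formula) auto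
qed

lemma set_jump: assumes g: "good x" and L: "length x \<ge> 3"
  shows "set_pmf (jump x) \<subseteq> merge x ` triples x"
proof -
  define f where "f = (\<lambda>T. if T \<in> triples x then trate x T / total_rate x else 0)"
  have tp: "0 < total_rate x" using total_rate_pos[OF g L] .
  have nn: "0 \<le> f T" for T
  proof (cases "T \<in> triples x")
    case True
    then show ?thesis unfolding f_def trate_def using tmass_pos[OF g True] tp by simp
  qed (simp add: f_def)
  have "(\<integral>\<^sup>+T. ennreal (f T) \<partial>count_space UNIV) = (\<Sum>T\<in>triples x. ennreal (f T))"
    by (rule nn_integral_count_space') (auto simp: finite_triples f_def)
  also have "\<dots> = ennreal (\<Sum>T\<in>triples x. f T)" using nn by (simp add: sum_ennreal)
  also have "(\<Sum>T\<in>triples x. f T) = (\<Sum>T\<in>triples x. trate x T) / total_rate x"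
    unfolding f_def by (simp add: sum_divide_distrib)
  also have "\<dots> = 1" using tp unfolding total_rate_def by simp
  finally have int: "(\<integral>\<^sup>+T. ennreal (f T) \<partial>count_space UNIV) = 1" by simp
  have "set_pmf (embed_pmf f) = {T. f T \<noteq> 0}" using set_embed_pmf[of f] nn int by blast
  also have "\<dots> \<subseteq> triples x" unfolding f_def by auto
  finally show ?thesis unfolding jump_def f_def by auto
qed

lemma subprob_expdens: "subprob_space (density lborel (\<lambda>h. ennreal (exponential_density r h)))"
proof (cases "r > 0")
  case True
  then show ?thesis using prob_space_exponential_density[OF True] prob_space_imp_subprob_space by blast
next
  case False
  then have "(\<lambda>h. ennreal (exponential_density r h)) = (\<lambda>_. 0)"
    by (auto simp: exponential_density_def ennreal_eq_0_iff mult_nonpos_nonneg intro!: ext)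
  then show ?thesis by (auto intro!: subprob_spaceI simp: emeasure_density)
qed

lemma pmf_bind_meas:
  fixes p :: "'a pmf" and G :: "'a \<Rightarrow> real \<Rightarrow> 'b measure"
  assumes G: "\<And>y. G y \<in> borel \<rightarrow>\<^sub>M subprob_algebra N"
  shows "(\<lambda>u. measure_pmf p \<bind> (\<lambda>y. G y u)) \<in> borel \<rightarrow>\<^sub>M subprob_algebra N"
proof -
  define pick where "pick y = (if y \<in> set_pmf p then y else (SOME z. z \<in> set_pmf p))" for y
  have pick_in: "pick y \<in> set_pmf p" for y
    unfolding pick_def using set_pmf_not_empty[of p] by (auto intro: someI_ex)
  have Gsp: "G y u \<in> space (subprob_algebra N)" for y u
    using measurable_space[OF G[of y], of u] by simp
  have eq: "measure_pmf p \<bind> (\<lambda>y. G y u) = measure_pmf p \<bind> (\<lambda>y. G (pick y) u)" for u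
    by (rule bind_cong_AE[where B=N]) (auto simp: Gsp pick_def intro!: AE_pmfI)
  show ?thesis
  proof (subst measurable_cong[OF eq])
    show "(\<lambda>u. measure_pmf p \<bind> (\<lambda>y. G (pick y) u)) \<in> borel \<rightarrow>\<^sub>M subprob_algebra N"
    proof (rule measurable_bind[where N="measure_pmf p"])
      show "(\<lambda>x. measure_pmf p) \<in> borel \<rightarrow>\<^sub>M subprob_algebra (measure_pmf p)"
        by (rule measurable_const) (auto simp: space_subprob_algebra prob_space_imp_subprob_space measure_pmf.prob_space_axioms)
      show "(\<lambda>x. G (pick (snd x)) (fst x)) \<in> borel \<Otimes>\<^sub>M measure_pmf p \<rightarrow>\<^sub>M subprob_algebra N"
      proof (rule measurable_compose_countable'[where I="set_pmf p" and f="\<lambda>i x. G i (fst x)"])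
        show "(\<lambda>x. G i (fst x)) \<in> borel \<Otimes>\<^sub>M measure_pmf p \<rightarrow>\<^sub>M subprob_algebra N" for i
          by (rule measurable_compose[OF measurable_fst]) (simp add: G)
        show "(\<lambda>x. pick (snd x)) \<in> borel \<Otimes>\<^sub>M measure_pmf p \<rightarrow>\<^sub>M count_space (set_pmf p)"
          by (rule measurable_compose[OF measurable_snd]) (simp add: pick_in)
      qed simp
    qed
  qed
qed

lemma return_in_space: "return (count_space UNIV) x \<in> space (subprob_algebra (count_space UNIV))"
  by (simp add: space_subprob_algebra prob_space_imp_subprob_space prob_space_return)

lemma coal_meas: "(\<lambda>s. coal_law_fuel k x s) \<in> borel \<rightarrow>\<^sub>M subprob_algebra (count_space UNIV)"
proof (induction k arbitrary: x)
  case 0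
  then show ?case by (simp add: return_in_space)
next
  case (Suc k)
  show ?case
  proof (cases "length x < 3")
    case True
    then show ?thesis by (simp add: return_in_space)
  next
    case False
    define D where "D = density lborel (\<lambda>h. ennreal (exponential_density (total_rate x) h))"
    define B where "B = (\<lambda>u. measure_pmf (jump x) \<bind> (\<lambda>y. coal_law_fuel k y u))"
    have B: "B \<in> borel \<rightarrow>\<^sub>M subprob_algebra (count_space UNIV)"
      unfolding B_def by (rule pmf_bind_meas) (rule Suc.IH)
    have sD: "sets D = sets borel" by (simp add: D_def)
    have "(\<lambda>s. D \<bind> (\<lambda>h. if s < h then return (count_space UNIV) x else B (s - h)))
           \<in> borel \<rightarrow>\<^sub>M subprob_algebra (count_space UNIV)"
    proof (rule measurable_bind[where N=D])
      show "(\<lambda>s. D) \<in> borel \<rightarrow>\<^sub>M subprob_algebra D"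
        by (rule measurable_const) (auto simp: space_subprob_algebra D_def subprob_expdens)
      have "(\<lambda>z. if fst z < snd z then return (count_space UNIV) x else B (fst z - snd z))
             \<in> (borel::real measure) \<Otimes>\<^sub>M (borel::real measure) \<rightarrow>\<^sub>M subprob_algebra (count_space UNIV)"
      proof (rule measurable_If)
        show "(\<lambda>z. return (count_space UNIV) x) \<in> (borel::real measure) \<Otimes>\<^sub>M (borel::real measure) \<rightarrow>\<^sub>M subprob_algebra (count_space UNIV)"
          by (rule measurable_const) (rule return_in_space)
        show "(\<lambda>z. B (fst z - snd z)) \<in> (borel::real measure) \<Otimes>\<^sub>M (borel::real measure) \<rightarrow>\<^sub>M subprob_algebra (count_space UNIV)"
          by (rule measurable_compose[OF _ B]) measurable
        show "{z \<in> space ((borel::real measure) \<Otimes>\<^sub>M (borel::real measure)). fst z < snd z} \<in> sets ((borel::real measure) \<Otimes>\<^sub>M (borel::real measure))"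
          by measurable
      qed
      then show "(\<lambda>z. if fst z < snd z then return (count_space UNIV) x else B (fst z - snd z))
             \<in> borel \<Otimes>\<^sub>M D \<rightarrow>\<^sub>M subprob_algebra (count_space UNIV)"
        by (subst measurable_cong_sets[OF sets_pair_measure_cong[OF refl sD] refl])
    qed
    then show ?thesis using False unfolding B_def D_def by simp
  qed
qed

lemma coal_space: "coal_law_fuel k x s \<in> space (subprob_algebra (count_space UNIV))"
  using measurable_space[OF coal_meas] by simp

lemma exp_int:
  assumes r: "0 < r" and a: "a < r"
  shows "(\<integral>\<^sup>+h. ennreal (exponential_density r h) * ennreal (exp (a*h)) \<partial>lborel) = ennreal (r/(r-a))"
proof -
  have ra: "0 < r - a" using a by simp
  have pw: "ennreal (exponential_density r h) * ennreal (exp (a*h)) =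
      ennreal (r/(r-a)) * ennreal (exponential_density (r-a) h)" for h
  proof (cases "h < 0")
    case True then show ?thesis by (simp add: exponential_density_def)
  next
    case False
    have "exponential_density r h * exp (a*h) = r/(r-a) * exponential_density (r-a) h"
      using False r a by (simp add: exponential_density_def field_simps flip: exp_add)
    moreover have "0 \<le> exponential_density r h" "0 \<le> r/(r-a)" using r a by (auto intro: exponential_density_nonneg)
    moreover have "0 \<le> exponential_density (r-a) h" using ra by (auto intro: exponential_density_nonneg)
    ultimately show ?thesis by (simp add: ennreal_mult[symmetric] mult_ac)
  qed
  have ra: "0 < r - a" using a by simp
  have one: "(\<integral>\<^sup>+h. ennreal (exponential_density (r-a) h) \<partial>lborel) = 1"
  proof -
    have "(\<integral>\<^sup>+h. ennreal (exponential_density (r-a) h) \<partial>lborel) =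
        (\<integral>\<^sup>+h. 1 \<partial>density lborel (\<lambda>h. ennreal (exponential_density (r-a) h)))"
      by (subst nn_integral_density) auto
    also have "\<dots> = 1"
      using prob_space.emeasure_space_1[OF prob_space_exponential_density[OF ra]] by simp
    finally show ?thesis .
  qed
  show ?thesis unfolding pw by (subst nn_integral_cmult) (auto simp: one)
qed

lemma pmf_bind_bound:
  assumes g: "\<And>y. g y \<in> space (subprob_algebra (count_space UNIV))"
    and b: "\<And>y. y \<in> set_pmf p \<Longrightarrow> emeasure (g y) A \<le> c"
  shows "emeasure (measure_pmf p \<bind> g) A \<le> c"
proof -
  have "emeasure (measure_pmf p \<bind> g) A = (\<integral>\<^sup>+y. emeasure (g y) A \<partial>measure_pmf p)"
    by (rule emeasure_bind[where N="count_space UNIV"]) (auto simp: g)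
  also have "\<dots> \<le> (\<integral>\<^sup>+y. c \<partial>measure_pmf p)"
    by (rule nn_integral_mono_AE) (auto intro!: AE_pmfI b)
  also have "\<dots> = c" by (simp add: measure_pmf.emeasure_space_1)
  finally show ?thesis .
qed

lemma dens_bind_bound:
  assumes r: "0 < r" and a: "a < r" and c: "0 \<le> c"
    and F: "F \<in> density lborel (\<lambda>h. ennreal (exponential_density r h)) \<rightarrow>\<^sub>M subprob_algebra (count_space UNIV)"
    and b: "\<And>h. emeasure (F h) A \<le> ennreal (c * exp (a*h))"
  shows "emeasure (density lborel (\<lambda>h. ennreal (exponential_density r h)) \<bind> F) A \<le> ennreal (c * (r/(r-a)))"
proof -
  let ?D = "density lborel (\<lambda>h. ennreal (exponential_density r h))"
  have "emeasure (?D \<bind> F) A = (\<integral>\<^sup>+h. emeasure (F h) A \<partial>?D)"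
    by (rule emeasure_bind[OF _ F]) auto
  also have "\<dots> \<le> (\<integral>\<^sup>+h. ennreal (c * exp (a*h)) \<partial>?D)"
    by (rule nn_integral_mono) (rule b)
  also have "\<dots> = (\<integral>\<^sup>+h. ennreal (exponential_density r h) * ennreal (c * exp (a*h)) \<partial>lborel)"
    by (subst nn_integral_density) auto
  also have "\<dots> = (\<integral>\<^sup>+h. ennreal c * (ennreal (exponential_density r h) * ennreal (exp (a*h))) \<partial>lborel)"
    using c by (intro nn_integral_cong) (simp add: ennreal_mult mult_ac)
  also have "\<dots> = ennreal c * ennreal (r/(r-a))"
    by (subst nn_integral_cmult) (auto simp: exp_int[OF r a])
  also have "\<dots> = ennreal (c * (r/(r-a)))" using c r a by (intro ennreal_mult[symmetric]) auto
  finally show ?thesis .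
qed

lemma F_meas:
  "(\<lambda>h. if s < h then return (count_space UNIV) x else measure_pmf p \<bind> (\<lambda>y. coal_law_fuel k y (s - h)))
     \<in> density lborel (\<lambda>h. ennreal (exponential_density r h)) \<rightarrow>\<^sub>M subprob_algebra (count_space UNIV)"
proof -
  define B where "B = (\<lambda>u. measure_pmf p \<bind> (\<lambda>y. coal_law_fuel k y u))"
  have B: "B \<in> borel \<rightarrow>\<^sub>M subprob_algebra (count_space UNIV)"
    unfolding B_def by (rule pmf_bind_meas) (rule coal_meas)
  have "(\<lambda>h. if s < h then return (count_space UNIV) x else B (s - h)) \<in> (borel::real measure) \<rightarrow>\<^sub>M subprob_algebra (count_space UNIV)"
  proof (rule measurable_If)
    show "(\<lambda>z. return (count_space UNIV) x) \<in> (borel::real measure) \<rightarrow>\<^sub>M subprob_algebra (count_space UNIV)"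
      by (rule measurable_const) (rule return_in_space)
    have "(\<lambda>h::real. s - h) \<in> borel \<rightarrow>\<^sub>M borel" by (intro borel_measurable_diff) auto
    then show "(\<lambda>h. B (s - h)) \<in> (borel::real measure) \<rightarrow>\<^sub>M subprob_algebra (count_space UNIV)"
      by (rule measurable_compose[OF _ B])
    show "{h \<in> space (borel::real measure). s < h} \<in> sets (borel::real measure)"
      by simp
  qed
  moreover have eqm: "measurable (density lborel (\<lambda>h. ennreal (exponential_density r h))) (subprob_algebra (count_space UNIV))
     = measurable borel (subprob_algebra (count_space UNIV))"
    by (rule measurable_cong_sets) auto
  ultimately show ?thesis unfolding B_def by (simp only: eqm)
qed

fun PR :: "(nat \<Rightarrow> real) \<Rightarrow> real \<Rightarrow> nat \<Rightarrow> real" where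
  "PR f m 0 = 1"
| "PR f m (Suc 0) = 1"
| "PR f m (Suc (Suc L)) = (if real (Suc (Suc L)) < m then 1 else f (Suc (Suc L)) * PR f m L)"

lemma induct2: assumes "P 0" "P (Suc 0)" "\<And>n. P n \<Longrightarrow> P (Suc (Suc n))" shows "P n"
proof -
  have "P n \<and> P (Suc n)" by (induction n) (use assms in auto)
  then show ?thesis by simp
qed

lemma PR_ge1: assumes "\<And>K. m \<le> real K \<Longrightarrow> 1 \<le> f K" shows "1 \<le> PR f m L"
proof (induction L rule: induct2)
  case (3 n)
  show ?case
  proof (cases "real (Suc (Suc n)) < m")
    case False
    then have "1 \<le> f (Suc (Suc n))" using assms by auto
    then have "1 \<le> f (Suc (Suc n)) * PR f m n" using 3 mult_mono[of 1 "f (Suc (Suc n))" 1 "PR f m n"] by simp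
    then show ?thesis using False by (simp del: of_nat_Suc)
  qed (simp del: of_nat_Suc)
qed auto

lemma PR_nonneg: assumes "\<And>K. m \<le> real K \<Longrightarrow> 0 \<le> f K" shows "0 \<le> PR f m L"
proof (induction L rule: induct2)
  case (3 n)
  show ?case
  proof (cases "real (Suc (Suc n)) < m")
    case False
    then have "0 \<le> f (Suc (Suc n))" using assms by auto
    then show ?thesis using False 3 by (simp del: of_nat_Suc)
  qed (simp del: of_nat_Suc)
qed auto

lemma PR_step: assumes "2 \<le> L" "m \<le> real L" shows "PR f m L = f L * PR f m (L - 2)"
proof -
  have "L = Suc (Suc (L - 2))" using assms(1) by simp
  then obtain L' where "L = Suc (Suc L')" by blast
  then show ?thesis using assms(2) by (simp del: of_nat_Suc)
qed

lemma PR_below: assumes "real L < m" shows "PR f m L = 1"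
proof (cases "2 \<le> L")
  case True
  have "L = Suc (Suc (L - 2))" using True by simp
  then obtain L' where "L = Suc (Suc L')" by blast
  then show ?thesis using assms by (simp del: of_nat_Suc)
next
  case False
  then have "L = 0 \<or> L = Suc 0" by auto
  then show ?thesis by auto
qed

lemma Rt_nonneg: "0 \<le> M \<Longrightarrow> 0 \<le> Rt M K"
  unfolding Rt_def by simp

lemma jump_props:
  assumes "good x" "length x \<ge> 3" "y \<in> set_pmf (jump x)"
  shows "good y" "sum_list y = sum_list x" "length y = length x - 2"
  using set_jump[OF assms(1,2)] assms(3) merge_props[OF assms(1)] by auto

lemma coal_Suc_big: "\<not> length x < 3 \<Longrightarrow> coal_law_fuel (Suc k) x s =
   density lborel (\<lambda>h. ennreal (exponential_density (total_rate x) h)) \<bind>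
        (\<lambda>h. if s < h then return (count_space UNIV) x
             else measure_pmf (jump x) \<bind> (\<lambda>y. coal_law_fuel k y (s - h)))"
  by simp

lemma upper_tail:
  fixes w m M :: real
  assumes th: "0 < w" and m: "2 < m" and R: "\<And>K. m \<le> real K \<Longrightarrow> w < Rt M K"
  shows "good x \<Longrightarrow> sum_list x = M \<Longrightarrow> length x \<le> k \<Longrightarrow>
    emeasure (coal_law_fuel k x s) {y. m \<le> real (length y)} \<le>
    ennreal (if real (length x) < m then 0 else exp (- w * s) * PR (\<lambda>K. Rt M K / (Rt M K - w)) m (length x))"
proof (induction k arbitrary: x s)
  case 0
  then show ?case using m by (simp add: emeasure_return)
next
  case (Suc k)
  define fU where "fU = (\<lambda>K. Rt M K / (Rt M K - w))"
  have fU1: "1 \<le> fU K" if "m \<le> real K" for K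
    using R[OF that] th unfolding fU_def by simp
  have PR1: "1 \<le> PR fU m L" for L by (rule PR_ge1) (rule fU1)
  let ?A = "{y. m \<le> real (length y)}"
  show ?case
  proof (cases "length x < 3")
    case True
    then show ?thesis using m by (simp add: emeasure_return)
  next
    case False
    let ?L = "length x"
    have r: "total_rate x = Rt M ?L" using Suc.prems total_rate_formula by simp
    have rpos: "0 < total_rate x" using total_rate_pos[OF Suc.prems(1)] False by simp
    have ys: "good y \<and> sum_list y = M \<and> length y = ?L - 2 \<and> length y \<le> k" if "y \<in> set_pmf (jump x)" for y
      using jump_props[OF Suc.prems(1) _ that] False Suc.prems by auto
    have Fm: "(\<lambda>h. if s < h then return (count_space UNIV) x
             else measure_pmf (jump x) \<bind> (\<lambda>y. coal_law_fuel k y (s - h)))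
     \<in> density lborel (\<lambda>h. ennreal (exponential_density (total_rate x) h)) \<rightarrow>\<^sub>M subprob_algebra (count_space UNIV)"
      by (rule F_meas)
    show ?thesis
    proof (cases "real ?L < m")
      case True
      have b: "emeasure (if s < h then return (count_space UNIV) x
             else measure_pmf (jump x) \<bind> (\<lambda>y. coal_law_fuel k y (s - h))) ?A \<le> ennreal (0 * exp (0*h))" for h
      proof (cases "s < h")
        case True
        then show ?thesis using \<open>real ?L < m\<close> by (simp add: emeasure_return)
      next
        case False
        have "emeasure (measure_pmf (jump x) \<bind> (\<lambda>y. coal_law_fuel k y (s - h))) ?A \<le> ennreal 0"
        proof (rule pmf_bind_bound[OF coal_space])
          fix y assume y: "y \<in> set_pmf (jump x)"
          have l: "real (length y) < m"
          proof -
            have "length y \<le> length x" using ys[OF y] by simp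
            then show ?thesis using True by (meson le_less_trans of_nat_le_iff)
          qed
          have "emeasure (coal_law_fuel k y (s - h)) ?A \<le>
             ennreal (if real (length y) < m then 0 else exp (- w * (s-h)) * PR (\<lambda>K. Rt M K / (Rt M K - w)) m (length y))"
            by (rule Suc.IH) (use ys[OF y] in auto)
          then show "emeasure (coal_law_fuel k y (s - h)) ?A \<le> ennreal 0"
            using l by simp
        qed
        then show ?thesis using False by simp
      qed
      have "emeasure (coal_law_fuel (Suc k) x s) ?A \<le> ennreal (0 * (total_rate x / (total_rate x - 0)))"
        unfolding coal_Suc_big[OF False] by (rule dens_bind_bound[OF rpos _ _ Fm b]) (use rpos in auto)
      then show ?thesis using True by simp
    next
      case False2: False
      define c where "c = exp (- w * s) * PR fU m (?L - 2)"
      have c0: "0 \<le> c" unfolding c_def using PR1[of "?L - 2"] by simp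
      have b: "emeasure (if s < h then return (count_space UNIV) x
             else measure_pmf (jump x) \<bind> (\<lambda>y. coal_law_fuel k y (s - h))) ?A \<le> ennreal (c * exp (w*h))" for h
      proof (cases "s < h")
        case True
        have "1 \<le> exp (w*(h - s))" using th True by simp
        also have "exp (w*(h - s)) = exp (- w * s) * exp (w*h)" by (simp add: algebra_simps flip: exp_add)
        finally have e1: "1 \<le> exp (- w * s) * exp (w*h)" .
        have "1 \<le> PR fU m (?L - 2) * (exp (- w * s) * exp (w*h))"
          using mult_mono[OF PR1[of "?L - 2"] e1] PR1[of "?L - 2"] by simp
        then have "1 \<le> c * exp (w*h)" unfolding c_def by (simp add: mult_ac)
        then have "ennreal 1 \<le> ennreal (c * exp (w*h))" by (rule ennreal_leI)
        then have e2: "(1::ennreal) \<le> ennreal (c * exp (w*h))" by simp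
        have "emeasure (return (count_space UNIV) x) ?A \<le> 1" by (simp add: emeasure_return split: split_indicator)
        then have "emeasure (return (count_space UNIV) x) ?A \<le> ennreal (c * exp (w*h))"
          using e2 by (rule order_trans)
        then show ?thesis using True by simp
      next
        case False
        have "emeasure (measure_pmf (jump x) \<bind> (\<lambda>y. coal_law_fuel k y (s - h))) ?A \<le> ennreal (c * exp (w*h))"
        proof (rule pmf_bind_bound[OF coal_space])
          fix y assume y: "y \<in> set_pmf (jump x)"
          have "emeasure (coal_law_fuel k y (s - h)) ?A \<le>
             ennreal (if real (length y) < m then 0 else exp (- w * (s-h)) * PR fU m (length y))"
            using Suc.IH[of y "s - h"] ys[OF y] unfolding fU_def by simp
          also have "\<dots> \<le> ennreal (exp (- w * (s-h)) * PR fU m (length y))"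
            using PR1[of "length y"] by (intro ennreal_leI) auto
          also have "exp (- w * (s-h)) * PR fU m (length y) = c * exp (w*h)"
            unfolding c_def using ys[OF y] by (simp add: algebra_simps flip: exp_add)
          finally show "emeasure (coal_law_fuel k y (s - h)) ?A \<le> ennreal (c * exp (w*h))" .
        qed
        then show ?thesis using False by simp
      qed
      have "emeasure (coal_law_fuel (Suc k) x s) ?A \<le> ennreal (c * (total_rate x / (total_rate x - w)))"
        unfolding coal_Suc_big[OF False] by (rule dens_bind_bound[OF rpos _ c0 Fm b]) (use R False2 r in auto)
      also have "c * (total_rate x / (total_rate x - w)) = exp (- w * s) * PR fU m ?L"
        unfolding c_def r using PR_step[of ?L m fU] False False2 by (simp add: fU_def)
      finally show ?thesis using False2 unfolding fU_def by simp
    qed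
  qed
qed

lemma lower_tail:
  fixes w m M :: real
  assumes th: "0 < w" and m: "2 < m" and M: "0 \<le> M"
  shows "good x \<Longrightarrow> sum_list x = M \<Longrightarrow> length x \<le> k \<Longrightarrow> 0 \<le> s \<Longrightarrow>
    emeasure (coal_law_fuel k x s) {y. real (length y) < m} \<le>
    ennreal (exp (w * s) * PR (\<lambda>K. Rt M K / (Rt M K + w)) m (length x))"
proof (induction k arbitrary: x s)
  case 0
  then show ?case using m th by (simp add: emeasure_return PR_below)
next
  case (Suc k)
  define fL where "fL = (\<lambda>K. Rt M K / (Rt M K + w))"
  have fL0: "0 \<le> fL K" for K
    using Rt_nonneg[OF M, of K] th unfolding fL_def by simp
  have PR0: "0 \<le> PR fL m L" for L by (rule PR_nonneg) (rule fL0)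
  let ?A = "{y. real (length y) < m}"
  let ?L = "length x"
  show ?case
  proof (cases "real ?L < m")
    case True
    have sp: "subprob_space (coal_law_fuel (Suc k) x s)"
      using coal_space[of "Suc k" x s] unfolding space_subprob_algebra by blast
    have "emeasure (coal_law_fuel (Suc k) x s) ?A \<le> 1"
      by (rule subprob_space.subprob_emeasure_le_1[OF sp])
    also have "1 \<le> ennreal (exp (w * s) * PR fL m ?L)"
      using True Suc.prems th by (simp add: PR_below)
    finally show ?thesis unfolding fL_def .
  next
    case False2: False
    then have False: "\<not> length x < 3" using m by linarith
    have r: "total_rate x = Rt M ?L" using Suc.prems total_rate_formula by simp
    have rpos: "0 < total_rate x" using total_rate_pos[OF Suc.prems(1)] False by simp
    have ys: "good y \<and> sum_list y = M \<and> length y = ?L - 2 \<and> length y \<le> k" if "y \<in> set_pmf (jump x)" for y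
      using jump_props[OF Suc.prems(1) _ that] False Suc.prems by auto
    have Fm: "(\<lambda>h. if s < h then return (count_space UNIV) x
             else measure_pmf (jump x) \<bind> (\<lambda>y. coal_law_fuel k y (s - h)))
     \<in> density lborel (\<lambda>h. ennreal (exponential_density (total_rate x) h)) \<rightarrow>\<^sub>M subprob_algebra (count_space UNIV)"
      by (rule F_meas)
    define c where "c = exp (w * s) * PR fL m (?L - 2)"
    have c0: "0 \<le> c" unfolding c_def using PR0[of "?L - 2"] by simp
    have b: "emeasure (if s < h then return (count_space UNIV) x
           else measure_pmf (jump x) \<bind> (\<lambda>y. coal_law_fuel k y (s - h))) ?A \<le> ennreal (c * exp (- w * h))" for h
    proof (cases "s < h")
      case True
      then show ?thesis using False2 by (simp add: emeasure_return)
    next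
      case False
      have "emeasure (measure_pmf (jump x) \<bind> (\<lambda>y. coal_law_fuel k y (s - h))) ?A \<le> ennreal (c * exp (- w * h))"
      proof (rule pmf_bind_bound[OF coal_space])
        fix y assume y: "y \<in> set_pmf (jump x)"
        have "emeasure (coal_law_fuel k y (s - h)) ?A \<le> ennreal (exp (w * (s-h)) * PR fL m (length y))"
          using Suc.IH[of y "s - h"] ys[OF y] False unfolding fL_def by simp
        also have "exp (w * (s-h)) * PR fL m (length y) = c * exp (- w * h)"
          unfolding c_def using ys[OF y] by (simp add: algebra_simps flip: exp_add)
        finally show "emeasure (coal_law_fuel k y (s - h)) ?A \<le> ennreal (c * exp (- w * h))" .
      qed
      then show ?thesis using False by simp
    qed
    have "emeasure (coal_law_fuel (Suc k) x s) ?A \<le> ennreal (c * (total_rate x / (total_rate x - - w)))"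
      unfolding coal_Suc_big[OF False] by (rule dens_bind_bound[OF rpos _ c0 Fm]) (use b th rpos in auto)
    also have "c * (total_rate x / (total_rate x - - w)) = exp (w * s) * PR fL m ?L"
      unfolding c_def r using PR_step[of ?L m fL] False False2 by (simp add: fL_def)
    finally show ?thesis unfolding fL_def by simp
  qed
qed

lemma PR_tele:
  fixes f :: "nat \<Rightarrow> real" and \<phi> :: "nat \<Rightarrow> real"
  assumes m2: "2 < m"
    and f: "\<And>K. m \<le> real K \<Longrightarrow> 0 \<le> f K \<and> f K \<le> exp (\<phi> (K-2) - \<phi> K)"
    and B: "\<And>K. m - 2 \<le> real K \<Longrightarrow> real K < m \<Longrightarrow> \<phi> K \<le> Bd"
  shows "m - 2 \<le> real L \<Longrightarrow> PR f m L \<le> exp (Bd - \<phi> L)"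
proof (induction L rule: induct2)
  case 1 then show ?case using m2 by simp
next
  case 2 then show ?case using B[of 1] m2 by simp
next
  case (3 n)
  show ?case
  proof (cases "real (Suc (Suc n)) < m")
    case True
    then show ?thesis using B[of "Suc (Suc n)"] 3(2) by (simp del: of_nat_Suc)
  next
    case False
    then have "m - 2 \<le> real n" by simp
    then have IH: "PR f m n \<le> exp (Bd - \<phi> n)" by (rule 3(1))
    have P0: "0 \<le> PR f m n" by (rule PR_nonneg) (use f in blast)
    have fs: "0 \<le> f (Suc (Suc n))" "f (Suc (Suc n)) \<le> exp (\<phi> n - \<phi> (Suc (Suc n)))"
      using f[of "Suc (Suc n)"] False by auto
    have "f (Suc (Suc n)) * PR f m n \<le> exp (\<phi> n - \<phi> (Suc (Suc n))) * exp (Bd - \<phi> n)"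
      by (rule mult_mono[OF fs(2) IH]) (use P0 in auto)
    also have "\<dots> = exp (Bd - \<phi> (Suc (Suc n)))" by (simp flip: exp_add)
    finally show ?thesis using False by (simp del: of_nat_Suc)
  qed
qed

lemma Rt_lower: assumes "3 \<le> K" "0 \<le> M" shows "(real K - 1) * (real K - 3) * M / 2 \<le> Rt M K"
proof -
  have "(real K - 1) * (real K - 3) * M \<le> (real K - 1) * (real K - 2) * (M + real K)"
    using assms by (intro mult_mono) auto
  then show ?thesis using assms by (simp add: Rt_formula)
qed

lemma upper_bound:
  fixes x c d :: real and N :: nat
  assumes N: "real N = x^4" and x: "0 < x" and c: "0 < c" and d: "0 < d"
    and m4: "4 < c*x^2" and big: "(1+d)*x^3 \<le> d*(c*x^2-3)^2/2" and Nm: "c*x^2 - 2 \<le> real N"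
  shows "\<And>K. c*x^2 \<le> real K \<Longrightarrow> x^7 < Rt (real N) K"
    and "PR (\<lambda>K. Rt (real N) K / (Rt (real N) K - x^7)) (c*x^2) N \<le> exp ((1+d)*x^3/(c*x^2-3))"
proof -
  define m where "m = c*x^2"
  define w where "w = x^7"
  define \<beta> where "\<beta> = (1+d)*x^3"
  have w: "0 < w" using x by (simp add: w_def)
  have wN: "w = x^3 * real N" by (simp add: w_def N power_add[symmetric])
  have key: "(1+d)*w \<le> d * ((real K - 1) * (real K - 3) * real N / 2)
      \<and> w < Rt (real N) K" if K: "m \<le> real K" for K
  proof -
    have K3: "3 \<le> K" using K m4 unfolding m_def by linarith
    have "(m-3)^2 \<le> (real K - 3)^2" using K m4 unfolding m_def by (intro power_mono) auto
    also have "\<dots> \<le> (real K - 1) * (real K - 3)" using K3 by (simp add: power2_eq_square mult_right_mono)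
    finally have sq: "(m-3)^2 \<le> (real K - 1) * (real K - 3)" .
    have "(1+d)*w = (1+d)*x^3 * real N" by (simp add: wN)
    also have "\<dots> \<le> d*(m-3)^2/2 * real N" using big N unfolding m_def by (intro mult_right_mono) auto
    also have "\<dots> \<le> d * ((real K - 1) * (real K - 3) * real N / 2)"
    proof -
      have "(m-3)^2 * real N \<le> (real K - 1) * (real K - 3) * real N" by (rule mult_right_mono[OF sq]) simp
      then show ?thesis using d by (simp add: mult_left_mono)
    qed
    finally have A: "(1+d)*w \<le> d * ((real K - 1) * (real K - 3) * real N / 2)" .
    have "w < (real K - 1) * (real K - 3) * real N / 2"
    proof -
      have "(1+d)*w \<le> d * ((real K - 1) * (real K - 3) * real N / 2)" by (rule A)
      then have "w + d*w \<le> d * ((real K - 1) * (real K - 3) * real N / 2)" by (simp add: distrib_right)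
      then have "d*w < d * ((real K - 1) * (real K - 3) * real N / 2)" using w by linarith
      then show ?thesis using d by simp
    qed
    also have "\<dots> \<le> Rt (real N) K" using K3 by (intro Rt_lower) auto
    finally show ?thesis using A by simp
  qed
  show "\<And>K. c*x^2 \<le> real K \<Longrightarrow> x^7 < Rt (real N) K" using key unfolding m_def w_def by blast
  have "PR (\<lambda>K. Rt (real N) K / (Rt (real N) K - w)) m N \<le> exp (\<beta>/(m-3) - \<beta>/(real N - 1))"
  proof (rule PR_tele[where \<phi>="\<lambda>K. \<beta>/(real K - 1)"])
    show "2 < m" using m4 unfolding m_def by simp
    show "m - 2 \<le> real N" using Nm unfolding m_def .
  next
    fix K assume K: "m \<le> real K"
    have K3: "3 \<le> K" using K m4 unfolding m_def by linarith
    define R where "R = Rt (real N) K"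
    define A where "A = (real K - 1) * (real K - 3) * real N / 2"
    have kA: "(1+d)*w \<le> d*A" "w < R" using key[OF K] unfolding A_def R_def by auto
    have AR: "A \<le> R" unfolding A_def R_def using K3 by (intro Rt_lower) auto
    have "w + d*w \<le> d*A" using kA(1) by (simp add: distrib_right)
    then have "d*w < d*A" using w by linarith
    then have Apos: "w < A" using d by simp
    have "R / (R - w) = 1 + w/(R - w)" using kA by (simp add: field_simps)
    also have "\<dots> \<le> exp (w/(R-w))" by (rule exp_ge_add_one_self[THEN order.trans[rotated]]) simp
    also have "w/(R-w) \<le> w/(A-w)" using AR Apos w by (intro divide_left_mono) auto
    also have "w/(A-w) \<le> (1+d)*w/A"
    proof -
      have "w*((1+d)*w) \<le> w*(d*A)" by (rule mult_left_mono[OF kA(1)]) (use w in simp)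
      then have "w * A \<le> (1+d)*w*(A-w)" by (simp add: algebra_simps)
      then show ?thesis using Apos w by (simp add: field_simps)
    qed
    also have "(1+d)*w/A = \<beta>/(real (K-2) - 1) - \<beta>/(real K - 1)"
    proof -
      have Kg: "4 < real K" using K m4 unfolding m_def by linarith
      have Np: "0 < real N" using N x by simp
      have e0: "real (K-2) - 1 = real K - 3" using K3 by (simp add: of_nat_diff)
      have e1: "\<beta>/(real K - 3) - \<beta>/(real K - 1) = 2*\<beta>/((real K - 1)*(real K - 3))"
        using Kg by (simp add: field_simps)
      have e2: "(1+d)*w/A = 2*\<beta>/((real K - 1)*(real K - 3))"
      proof -
        define P where "P = (real K - 1)*(real K - 3)"
        have P0: "P/2 \<noteq> 0" using Kg unfolding P_def by simp
        have Ae: "A = (P/2) * real N" unfolding A_def P_def by simp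
        have "(1+d)*w/A = ((1+d)*x^3 * real N)/((P/2) * real N)" unfolding Ae wN by (simp add: mult_ac)
        also have "\<dots> = ((1+d)*x^3)/(P/2)" using Np by (intro nonzero_mult_divide_mult_cancel_right) simp
        also have "\<dots> = 2*\<beta>/P" unfolding \<beta>_def by simp
        finally show ?thesis unfolding P_def .
      qed
      show ?thesis unfolding e0 e1 e2 ..
    qed
    finally have "R / (R - w) \<le> exp (\<beta>/(real (K-2) - 1) - \<beta>/(real K - 1))" by simp
    moreover have "0 \<le> R / (R - w)" using kA w by simp
    ultimately show "0 \<le> Rt (real N) K / (Rt (real N) K - w) \<and>
        Rt (real N) K / (Rt (real N) K - w) \<le> exp (\<beta>/(real (K-2) - 1) - \<beta>/(real K - 1))"
      unfolding R_def by simp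
  next
    fix K assume K: "m - 2 \<le> real K" "real K < m"
    have "m - 3 \<le> real K - 1" using K by simp
    moreover have "0 < m - 3" using m4 unfolding m_def by simp
    moreover have "0 \<le> \<beta>" using d x unfolding \<beta>_def by simp
    ultimately show "\<beta>/(real K - 1) \<le> \<beta>/(m-3)" by (intro divide_left_mono) auto
  qed
  also have "\<dots> \<le> exp (\<beta>/(m-3))"
  proof -
    have "0 \<le> \<beta>/(real N - 1)" using d x Nm m4 unfolding \<beta>_def m_def by (intro divide_nonneg_nonneg) auto
    then show ?thesis by simp
  qed
  finally show "PR (\<lambda>K. Rt (real N) K / (Rt (real N) K - x^7)) (c*x^2) N \<le> exp ((1+d)*x^3/(c*x^2-3))"
    unfolding m_def w_def \<beta>_def .
qed

definition hB :: "nat \<Rightarrow> nat \<Rightarrow> real" where "hB B K = 1 / (real (min K B) + 2)"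

lemma hB_diff:
  assumes "2 \<le> K"
  shows "K \<le> B + 2 \<Longrightarrow> hB B (K-2) - hB B K \<le> 2 / (real K * (real K + 2))"
    and "B + 2 < K \<Longrightarrow> hB B (K-2) = hB B K"
proof -
  have r: "real (K - 2) + 2 = real K" using assms by (simp add: of_nat_diff)
  show "B + 2 < K \<Longrightarrow> hB B (K-2) = hB B K" unfolding hB_def by simp
  assume K: "K \<le> B + 2"
  consider "K \<le> B" | "K = B + 1" | "K = B + 2" using K by linarith
  then show "hB B (K-2) - hB B K \<le> 2 / (real K * (real K + 2))"
  proof cases
    case 1
    then have "hB B (K-2) - hB B K = 1/real K - 1/(real K + 2)" unfolding hB_def using r by simp
    also have "\<dots> = 2 / (real K * (real K + 2))" using assms by (simp add: field_simps)
    finally show ?thesis by simp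
  next
    case 2
    then have "hB B (K-2) - hB B K = 1/real K - 1/(real K + 1)" unfolding hB_def using r by simp
    also have "\<dots> = 1 / (real K * (real K + 1))" using assms by (simp add: field_simps)
    also have "\<dots> = 2 / (2 * (real K * (real K + 1)))" by simp
    also have "\<dots> \<le> 2 / (real K * (real K + 2))"
    proof (rule frac_le)
      show "0 < real K * (real K + 2)" using assms by simp
      show "real K * (real K + 2) \<le> 2 * (real K * (real K + 1))" using assms by (simp add: algebra_simps)
    qed auto
    finally show ?thesis .
  next
    case 3
    then have "hB B (K-2) - hB B K = 0" unfolding hB_def by simp
    then show ?thesis by simp
  qed
qed

lemma lower_bound:
  fixes x c :: real and N B :: nat
  assumes N: "real N = x^4" and x: "0 < x" and c: "0 < c" and m2: "2 < c*x^2"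
    and BN: "B \<le> N" and Nm: "c*x^2 - 2 \<le> real N"
  shows "PR (\<lambda>K. Rt (real N) K / (Rt (real N) K + x^7)) (c*x^2) N \<le>
     exp (- (x^7/(2*((real N + real B + 2)/2 + x^7/(c*x^2)^2)))/(c*x^2+2)
          + (x^7/(2*((real N + real B + 2)/2 + x^7/(c*x^2)^2)))/(real B + 2))"
proof -
  define m where "m = c*x^2"
  define w where "w = x^7"
  define Q where "Q = (real N + real B + 2)/2 + w/m^2"
  define \<beta> where "\<beta> = w/(2*Q)"
  have w: "0 < w" using x by (simp add: w_def)
  have m0: "0 < m" using m2 unfolding m_def by simp
  have Q: "0 < Q" unfolding Q_def using w m0 by (intro add_nonneg_pos) auto
  have \<beta>0: "0 \<le> \<beta>" unfolding \<beta>_def using w Q by simp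
  have "PR (\<lambda>K. Rt (real N) K / (Rt (real N) K + w)) m N \<le> exp (- \<beta>/(m+2) - (- \<beta> * hB B N))"
  proof (rule PR_tele[where \<phi>="\<lambda>K. - \<beta> * hB B K"])
    show "2 < m" using m2 unfolding m_def .
    show "m - 2 \<le> real N" using Nm unfolding m_def .
  next
    fix K assume K: "m \<le> real K"
    have K3: "3 \<le> K" using K m2 unfolding m_def by linarith
    define R where "R = Rt (real N) K"
    have R0: "0 \<le> R" unfolding R_def by (rule Rt_nonneg) simp
    have f0: "0 \<le> R / (R + w)" using R0 w by simp
    have fe: "R / (R + w) \<le> exp (- (w/(R+w)))"
    proof -
      have "R / (R + w) = 1 + (- (w/(R+w)))" using R0 w by (simp add: field_simps)
      also have "\<dots> \<le> exp (- (w/(R+w)))" by (rule exp_ge_add_one_self[THEN order.trans[rotated]]) simp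
      finally show ?thesis .
    qed
    have "R / (R + w) \<le> exp (- \<beta> * hB B (K-2) - (- \<beta> * hB B K))"
    proof (cases "K \<le> B + 2")
      case True
      have hd: "hB B (K-2) - hB B K \<le> 2 / (real K * (real K + 2))" using hB_diff(1)[of K B] K3 True by simp
      have Rb: "R \<le> real K * (real K + 2) * ((real N + real B + 2)/2)"
      proof -
        have "R = (real K - 1) * (real K - 2) * (real N + real K) / 2" unfolding R_def using K3 by (simp add: Rt_formula)
        also have "\<dots> \<le> real K * (real K + 2) * (real N + real B + 2) / 2"
          using K3 True by (intro divide_right_mono mult_mono) auto
        finally show ?thesis by simp
      qed
      have wb: "w \<le> real K * (real K + 2) * (w/m^2)"
      proof -
        have "m^2 \<le> real K * (real K + 2)" using K m0 by (simp add: power2_eq_square mult_mono)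
        then have "w * m^2 \<le> w * (real K * (real K + 2))" using w by (intro mult_left_mono) auto
        then show ?thesis using m0 by (simp add: field_simps)
      qed
      have "Q * (real K * (real K + 2)) = real K * (real K + 2) * ((real N + real B + 2)/2) + real K * (real K + 2) * (w/m^2)"
        unfolding Q_def by (simp add: algebra_simps)
      then have RQ: "R + w \<le> Q * (real K * (real K + 2))" using Rb wb by linarith
      have KK: "0 < real K * (real K + 2)" using K3 by simp
      have "\<beta> * (2 / (real K * (real K + 2))) \<le> w/(R+w)"
      proof -
        have "\<beta> * (2 / (real K * (real K + 2))) = w / (Q * (real K * (real K + 2)))"
          unfolding \<beta>_def using Q KK by (simp add: field_simps)
        also have "\<dots> \<le> w / (R + w)" using RQ w R0 by (intro divide_left_mono) auto
        finally show ?thesis .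
      qed
      moreover have "\<beta> * (hB B (K-2) - hB B K) \<le> \<beta> * (2 / (real K * (real K + 2)))"
        using hd \<beta>0 by (rule mult_left_mono)
      ultimately have "- (w/(R+w)) \<le> - \<beta> * hB B (K-2) - (- \<beta> * hB B K)" by (simp add: algebra_simps)
      then show ?thesis using fe by (meson exp_le_cancel_iff order_trans)
    next
      case False
      then have "hB B (K-2) = hB B K" using hB_diff(2)[of K B] K3 by simp
      moreover have "R / (R + w) \<le> 1" using R0 w by simp
      ultimately show ?thesis by simp
    qed
    then show "0 \<le> Rt (real N) K / (Rt (real N) K + w) \<and>
        Rt (real N) K / (Rt (real N) K + w) \<le> exp (- \<beta> * hB B (K-2) - (- \<beta> * hB B K))"
      using f0 unfolding R_def by simp
  next
    fix K assume K: "m - 2 \<le> real K" "real K < m"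
    have "1/(m+2) \<le> hB B K" unfolding hB_def using K m0 by (intro divide_left_mono) auto
    then have "\<beta> * (1/(m+2)) \<le> \<beta> * hB B K" using \<beta>0 by (rule mult_left_mono)
    then show "- \<beta> * hB B K \<le> - \<beta>/(m+2)" by simp
  qed
  also have "hB B N = 1/(real B + 2)" unfolding hB_def using BN by simp
  finally show ?thesis unfolding m_def w_def Q_def \<beta>_def by simp
qed

lemma asym_upper:
  fixes c d k :: real
  assumes c: "0 < c" and d: "0 < d" and k: "(1+d)/c < k"
  shows "eventually (\<lambda>x. 1 \<le> x \<and> 4 < c*x^2 \<and> (1+d)*x^3 \<le> d*(c*x^2-3)^2/2 \<and> c*x^2 - 2 \<le> x^4
          \<and> (1+d)*x^2/(c*x^2-3) < k) at_top"
proof -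
  have l: "((\<lambda>x::real. (1+d)*x^2/(c*x^2-3)) \<longlongrightarrow> (1+d)*inverse c) at_top"
    using c d by real_asymp
  have "eventually (\<lambda>x::real. (1+d)*x^2/(c*x^2-3) < k) at_top"
    by (rule order_tendstoD(2)[OF l]) (use k in \<open>simp add: field_simps\<close>)
  moreover have "eventually (\<lambda>x::real. 1 \<le> x) at_top" by real_asymp
  moreover have "eventually (\<lambda>x::real. 4 < c*x^2) at_top" using c by real_asymp
  moreover have "eventually (\<lambda>x::real. (1+d)*x^3 \<le> d*(c*x^2-3)^2/2) at_top" using c d by real_asymp
  moreover have "eventually (\<lambda>x::real. c*x^2 - 2 \<le> x^4) at_top" using c by real_asymp
  ultimately show ?thesis by eventually_elim auto
qed

lemma asym_lower:
  fixes c k :: real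
  assumes c: "0 < c" and k: "k < 1/c"
  shows "eventually (\<lambda>x. 1 \<le> x \<and> 2 < c*x^2 \<and> c*x^2 - 2 \<le> x^4 \<and> c*x^2 + 2 \<le> x^3 - 1
          \<and> k < x^6/(2*((x^4+x^3+2)/2 + x^3/c^2)) * (1/(c*x^2+2) - 1/(x^3+1))) at_top"
proof -
  have l: "((\<lambda>x::real. x^6/(2*((x^4+x^3+2)/2 + x^3/c^2)) * (1/(c*x^2+2) - 1/(x^3+1))) \<longlongrightarrow> inverse c) at_top"
    using c by real_asymp
  have "eventually (\<lambda>x::real. k < x^6/(2*((x^4+x^3+2)/2 + x^3/c^2)) * (1/(c*x^2+2) - 1/(x^3+1))) at_top"
    by (rule order_tendstoD(1)[OF l]) (use k in \<open>simp add: field_simps\<close>)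
  moreover have "eventually (\<lambda>x::real. 1 \<le> x) at_top" by real_asymp
  moreover have "eventually (\<lambda>x::real. 2 < c*x^2) at_top" using c by real_asymp
  moreover have "eventually (\<lambda>x::real. c*x^2 - 2 \<le> x^4) at_top" using c by real_asymp
  moreover have "eventually (\<lambda>x::real. c*x^2 + 2 \<le> x^3 - 1) at_top" using c by real_asymp
  ultimately show ?thesis by eventually_elim auto
qed

lemma exp_lim: assumes "0 < k" "0 < k'" shows "((\<lambda>x::real. exp (-k*x) + exp (-k'*x)) \<longlongrightarrow> 0) at_top"
proof -
  have a: "((\<lambda>x::real. exp (-k*x)) \<longlongrightarrow> 0) at_top" using assms(1) by real_asymp
  have b: "((\<lambda>x::real. exp (-k'*x)) \<longlongrightarrow> 0) at_top" using assms(2) by real_asymp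
  show ?thesis using tendsto_add[OF a b] by simp
qed

lemma xlim: "filterlim (\<lambda>n::nat. real (2*n+1) powr (1/4)) at_top sequentially"
  by real_asymp

lemma subprob_fin: "finite_measure (coal_law_fuel k x s)"
  using coal_space[of k x s] unfolding space_subprob_algebra subprob_space_def by blast

lemma good_rep: "good (replicate N 1)" by (simp add: good_def)

lemma x_facts:
  fixes n :: nat
  defines "x \<equiv> real (2*n+1) powr (1/4)"
  shows "0 < x" "real (2*n+1) = x^4" "sqrt (real (2*n+1)) = x^2" "real (2*n+1) powr (3/2) = x^6"
proof -
  have p: "0 < real (2*n+1)" by simp
  show "0 < x" unfolding x_def using p by simp
  have e: "x ^ k = real (2*n+1) powr (real k / 4)" for k
    unfolding x_def using p by (simp add: powr_power[symmetric] mult_ac powr_realpow[symmetric] powr_powr)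
  show "real (2*n+1) = x^4" unfolding e by simp
  show "sqrt (real (2*n+1)) = x^2" unfolding e using powr_half_sqrt[of "real (2*n+1)"] by simp
  show "real (2*n+1) powr (3/2) = x^6" unfolding e by simp
qed

lemma per_n_bound:
  fixes t \<epsilon> x c c' d k k' :: real and N :: nat
  assumes N: "real N = x^4" and sq: "sqrt (real N) = x^2"
    and t: "0 < t" and e: "0 < \<epsilon>"
    and cdef: "c = 1/t + \<epsilon>" and c'def: "c' = 1/t - \<epsilon>" and c': "0 < c'" and d: "0 < d"
    and up: "1 \<le> x \<and> 4 < c*x^2 \<and> (1+d)*x^3 \<le> d*(c*x^2-3)^2/2 \<and> c*x^2 - 2 \<le> x^4
          \<and> (1+d)*x^2/(c*x^2-3) < k"
    and low: "1 \<le> x \<and> 2 < c'*x^2 \<and> c'*x^2 - 2 \<le> x^4 \<and> c'*x^2 + 2 \<le> x^3 - 1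
          \<and> k' < x^6/(2*((x^4+x^3+2)/2 + x^3/c'^2)) * (1/(c'*x^2+2) - 1/(x^3+1))"
  shows "measure (coal_law_fuel N (replicate N 1) (t / x^6))
            {y. \<epsilon> < \<bar>real (length y) / sqrt (real N) - 1/t\<bar>}
         \<le> exp (-(t - k)*x) + exp (-(k' - t)*x)"
proof -
  define s where "s = t / x^6"
  define Mn where "Mn = coal_law_fuel N (replicate N 1) s"
  have x: "0 < x" "1 \<le> x" using up by auto
  have c: "0 < c" using cdef t e by (simp add: add_pos_pos)
  have s0: "0 \<le> s" unfolding s_def using t x by simp
  have x7: "x^7 = x^6 * x" using power_add[of x 6 1] by simp
  have ws: "x^7 * s = t * x" unfolding s_def x7 using x by simp
  have sp: "Mn \<in> space (subprob_algebra (count_space UNIV))" unfolding Mn_def by (rule coal_space)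
  then have sets: "sets Mn = sets (count_space UNIV)" by (simp add: space_subprob_algebra)
  have fm: "finite_measure Mn" unfolding Mn_def by (rule subprob_fin)
  let ?U = "{y::real list. c*x^2 \<le> real (length y)}"
  let ?L = "{y::real list. real (length y) < c'*x^2}"
  let ?A = "{y::real list. \<epsilon> < \<bar>real (length y) / sqrt (real N) - 1/t\<bar>}"
  have x2: "0 < x^2" using x by simp
  have AUL: "?A \<subseteq> ?U \<union> ?L"
  proof
    fix y assume "y \<in> ?A"
    then have "\<epsilon> < real (length y) / x^2 - 1/t \<or> \<epsilon> < 1/t - real (length y) / x^2"
      unfolding sq by auto
    then show "y \<in> ?U \<union> ?L"
    proof
      assume "\<epsilon> < real (length y) / x^2 - 1/t"
      then have "c < real (length y) / x^2" unfolding cdef by simp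
      then have "c * x^2 < real (length y)" using x2 by (simp add: less_divide_eq)
      then show ?thesis by simp
    next
      assume "\<epsilon> < 1/t - real (length y) / x^2"
      then have "real (length y) / x^2 < c'" unfolding c'def by simp
      then have "real (length y) < c' * x^2" using x2 by (simp add: divide_less_eq)
      then show ?thesis by simp
    qed
  qed
  have hyps: "good (replicate N 1)" "sum_list (replicate N 1) = real N" "length (replicate N (1::real)) \<le> N"
    by (auto simp: good_rep sum_list_replicate)
  have ub1: "\<And>K. c*x^2 \<le> real K \<Longrightarrow> x^7 < Rt (real N) K"
    and ub2: "PR (\<lambda>K. Rt (real N) K / (Rt (real N) K - x^7)) (c*x^2) N \<le> exp ((1+d)*x^3/(c*x^2-3))"
    using upper_bound[OF N x(1) c d] up N by auto
  have "emeasure Mn ?U \<le> ennreal (if real (length (replicate N (1::real))) < c*x^2 then 0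
         else exp (- (x^7) * s) * PR (\<lambda>K. Rt (real N) K / (Rt (real N) K - x^7)) (c*x^2) (length (replicate N (1::real))))"
    unfolding Mn_def by (rule upper_tail[OF _ _ ub1 hyps]) (use x up in auto)
  also have "\<dots> \<le> ennreal (exp (-(t - k)*x))"
  proof (rule ennreal_leI)
    have "exp (- (x^7) * s) * PR (\<lambda>K. Rt (real N) K / (Rt (real N) K - x^7)) (c*x^2) N
        \<le> exp (- (x^7) * s) * exp ((1+d)*x^3/(c*x^2-3))"
      by (rule mult_left_mono[OF ub2]) simp
    also have "\<dots> = exp (- (t*x) + x * ((1+d)*x^2/(c*x^2-3)))"
      using ws by (simp add: power3_eq_cube power2_eq_square mult_ac flip: exp_add)
    also have "\<dots> \<le> exp (-(t - k)*x)"
    proof -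
      have "x * ((1+d)*x^2/(c*x^2-3)) \<le> x * k" using up x by (intro mult_left_mono) auto
      then show ?thesis by (simp add: algebra_simps)
    qed
    finally show "(if real (length (replicate N (1::real))) < c*x^2 then 0
         else exp (- (x^7) * s) * PR (\<lambda>K. Rt (real N) K / (Rt (real N) K - x^7)) (c*x^2) (length (replicate N (1::real))))
         \<le> exp (-(t - k)*x)" by simp
  qed
  finally have eU: "emeasure Mn ?U \<le> ennreal (exp (-(t - k)*x))" .
  define B where "B = nat \<lfloor>x^3\<rfloor>"
  have y0: "0 \<le> x^3" using x by simp
  have eB: "real B = real_of_int \<lfloor>x^3\<rfloor>" unfolding B_def using y0 by simp
  have B1: "real B \<le> x^3" "x^3 - 1 < real B" unfolding eB using floor_correct[of "x^3"] by linarith+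
  have BN: "B \<le> N"
  proof -
    have "x^3 \<le> x^4" using x by (simp add: power_increasing)
    then show ?thesis using B1 N by linarith
  qed
  define Q where "Q = (real N + real B + 2)/2 + x^7/(c'*x^2)^2"
  define Qu where "Qu = (x^4+x^3+2)/2 + x^3/c'^2"
  define \<beta> where "\<beta> = x^7/(2*Q)"
  have Qpos: "0 < Q" unfolding Q_def using x c' by (intro add_pos_nonneg) auto
  have QQ: "Q \<le> Qu"
  proof -
    have "x^7/(c'*x^2)^2 = x^3/c'^2" using x c' by (simp add: field_simps)
    then show ?thesis unfolding Q_def Qu_def using N B1 by simp
  qed
  have lb: "PR (\<lambda>K. Rt (real N) K / (Rt (real N) K + x^7)) (c'*x^2) N \<le>
     exp (- \<beta>/(c'*x^2+2) + \<beta>/(real B + 2))"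
    unfolding \<beta>_def Q_def using lower_bound[OF N x(1) c' _ BN] low N by auto
  have "emeasure Mn ?L \<le> ennreal (exp (x^7 * s) * PR (\<lambda>K. Rt (real N) K / (Rt (real N) K + x^7)) (c'*x^2) (length (replicate N (1::real))))"
    unfolding Mn_def by (rule lower_tail[OF _ _ _ hyps s0]) (use x low in auto)
  also have "\<dots> \<le> ennreal (exp (-(k' - t)*x))"
  proof (rule ennreal_leI)
    define D' where "D' = 1/(c'*x^2+2) - 1/(x^3+1)"
    define D where "D = 1/(c'*x^2+2) - 1/(real B+2)"
    have D'0: "0 \<le> D'" unfolding D'_def using low c' x by (intro diff_ge_0_iff_ge[THEN iffD2] divide_left_mono) auto
    have DD: "D' \<le> D" unfolding D'_def D_def using B1 x by (simp add: divide_left_mono)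
    have bb: "x^7/(2*Qu) \<le> \<beta>" unfolding \<beta>_def using QQ Qpos x by (intro divide_left_mono) auto
    have "x * k' \<le> x * (x^6/(2*Qu) * D')" using low x unfolding Qu_def D'_def by (intro mult_left_mono) auto
    also have "\<dots> = x^7/(2*Qu) * D'" unfolding x7 by (simp add: mult_ac)
    also have "\<dots> \<le> \<beta> * D"
    proof -
      have "0 \<le> \<beta>" unfolding \<beta>_def using Qpos x by simp
      then show ?thesis using bb DD D'0 by (intro mult_mono) auto
    qed
    finally have kb: "x * k' \<le> \<beta> * D" .
    have "exp (x^7 * s) * PR (\<lambda>K. Rt (real N) K / (Rt (real N) K + x^7)) (c'*x^2) N
        \<le> exp (x^7 * s) * exp (- \<beta>/(c'*x^2+2) + \<beta>/(real B + 2))"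
      by (rule mult_left_mono[OF lb]) simp
    also have "\<dots> = exp (t*x - \<beta> * D)" unfolding ws D_def by (simp add: algebra_simps flip: exp_add)
    also have "\<dots> \<le> exp (-(k' - t)*x)" using kb by (simp add: algebra_simps)
    finally show "exp (x^7 * s) * PR (\<lambda>K. Rt (real N) K / (Rt (real N) K + x^7)) (c'*x^2) (length (replicate N (1::real)))
        \<le> exp (-(k' - t)*x)" by simp
  qed
  finally have eL: "emeasure Mn ?L \<le> ennreal (exp (-(k' - t)*x))" .
  have "emeasure Mn ?A \<le> emeasure Mn (?U \<union> ?L)" by (rule emeasure_mono[OF AUL]) (simp add: sets)
  also have "\<dots> \<le> emeasure Mn ?U + emeasure Mn ?L" by (rule emeasure_subadditive) (simp_all add: sets)
  also have "\<dots> \<le> ennreal (exp (-(t - k)*x)) + ennreal (exp (-(k' - t)*x))" by (rule add_mono[OF eU eL])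
  also have "\<dots> = ennreal (exp (-(t - k)*x) + exp (-(k' - t)*x))" by (simp add: ennreal_plus)
  finally have h: "emeasure Mn ?A \<le> ennreal (exp (-(t - k)*x) + exp (-(k' - t)*x))" .
  have em: "emeasure Mn ?A = ennreal (measure Mn ?A)" by (rule finite_measure.emeasure_eq_measure[OF fm])
  have "ennreal (measure Mn ?A) \<le> ennreal (exp (-(t - k)*x) + exp (-(k' - t)*x))"
    using h unfolding em .
  then have "measure Mn ?A \<le> exp (-(t - k)*x) + exp (-(k' - t)*x)"
    by (rule ennreal_le_iff[THEN iffD1, rotated]) (intro add_nonneg_nonneg; simp)
  then show ?thesis unfolding Mn_def s_def .
qed

lemma main_eps:
  fixes t \<epsilon> :: real
  assumes t: "0 < t" and e: "0 < \<epsilon>" and e2: "\<epsilon> < 1/t"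
  shows "(\<lambda>n::nat. measure
            (coal_from_units (2*n+1) (t / real (2*n+1) powr (3/2)))
            {x. \<bar>real (length x) / sqrt (real (2*n+1)) - 1 / t\<bar> > \<epsilon>}) \<longlonglongrightarrow> 0"
proof -
  define c where "c = 1/t + \<epsilon>"
  define c' where "c' = 1/t - \<epsilon>"
  define d where "d = (t*c - 1)/2"
  define k where "k = (t + (1+d)/c)/2"
  define k' where "k' = (t + 1/c')/2"
  define X where "X n = real (2*n+1) powr (1/4)" for n :: nat
  have c: "0 < c" unfolding c_def using t e by (intro add_pos_pos) simp_all
  have c': "0 < c'" unfolding c'_def using e2 by simp
  have tc: "t*c = 1 + t*\<epsilon>" unfolding c_def using t by (simp add: field_simps)
  have d: "0 < d" unfolding d_def using tc t e by simp
  have dc: "(1+d)/c < t"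
  proof -
    have "1 + d < t*c" unfolding d_def using tc t e by (simp add: field_simps)
    then show ?thesis using c by (simp add: divide_less_eq)
  qed
  have hk1: "(1+d)/c < k" "k < t"
  proof -
    define a where "a = (1+d)/c"
    have "a < t" using dc unfolding a_def .
    then have "a < (t + a)/2" "(t + a)/2 < t" by simp_all
    then show "(1+d)/c < k" "k < t" unfolding k_def a_def by auto
  qed
  note hk = hk1
  have tc': "t < 1/c'"
  proof -
    have "t * c' < 1" unfolding c'_def using t e by (simp add: field_simps)
    then show ?thesis using c' by (simp add: less_divide_eq)
  qed
  have hk1': "k' < 1/c'" "t < k'"
  proof -
    define a where "a = 1/c'"
    have "t < a" using tc' unfolding a_def .
    then have "(t + a)/2 < a" "t < (t + a)/2" by simp_all
    then show "k' < 1/c'" "t < k'" unfolding k'_def a_def by auto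
  qed
  note hk' = hk1'
  have evU: "eventually (\<lambda>n. 1 \<le> X n \<and> 4 < c*(X n)^2 \<and> (1+d)*(X n)^3 \<le> d*(c*(X n)^2-3)^2/2 \<and> c*(X n)^2 - 2 \<le> (X n)^4
          \<and> (1+d)*(X n)^2/(c*(X n)^2-3) < k) sequentially"
    by (rule eventually_compose_filterlim[OF asym_upper[OF c d hk(1)]]) (unfold X_def, rule xlim)
  have evL: "eventually (\<lambda>n. 1 \<le> X n \<and> 2 < c'*(X n)^2 \<and> c'*(X n)^2 - 2 \<le> (X n)^4 \<and> c'*(X n)^2 + 2 \<le> (X n)^3 - 1
          \<and> k' < (X n)^6/(2*(((X n)^4+(X n)^3+2)/2 + (X n)^3/c'^2)) * (1/(c'*(X n)^2+2) - 1/((X n)^3+1))) sequentially"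
    by (rule eventually_compose_filterlim[OF asym_lower[OF c' hk'(1)]]) (unfold X_def, rule xlim)
  have bnd: "eventually (\<lambda>n. measure
            (coal_from_units (2*n+1) (t / real (2*n+1) powr (3/2)))
            {x. \<bar>real (length x) / sqrt (real (2*n+1)) - 1 / t\<bar> > \<epsilon>}
          \<le> exp (-(t - k)*X n) + exp (-(k' - t)*X n)) sequentially"
    using evU evL
  proof eventually_elim
    case (elim n)
    note xf = x_facts[of n, folded X_def]
    show ?case
      unfolding coal_from_units_def coal_law_def length_replicate xf(4)
      by (rule per_n_bound[OF xf(2) xf(3) t e c_def c'_def c' d]) (use elim in auto)
  qed
  have g: "((\<lambda>n. exp (-(t - k)*X n) + exp (-(k' - t)*X n)) \<longlongrightarrow> 0) sequentially"
    using filterlim_compose[OF exp_lim[of "t - k" "k' - t"] xlim] hk hk' unfolding X_def by simp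
  show ?thesis
    by (rule tendsto_sandwich[OF _ bnd tendsto_const g]) (simp add: measure_nonneg)
qed

theorem lemma5p2:
  fixes t :: real
  assumes "t > 0"
  shows "\<forall>\<epsilon>>0. (\<lambda>n::nat. measure
            (coal_from_units (2*n+1) (t / real (2*n+1) powr (3/2)))
            {x. \<bar>real (length x) / sqrt (real (2*n+1)) - 1 / t\<bar> > \<epsilon>})
          \<longlonglongrightarrow> 0"
proof (intro allI impI)
  fix \<epsilon> :: real assume e: "\<epsilon> > 0"
  define e' where "e' = min \<epsilon> (1/(2*t))"
  have e': "0 < e'" "e' < 1/t" "e' \<le> \<epsilon>" unfolding e'_def using e assms by (auto simp: min_def field_simps)
  have lim: "(\<lambda>n::nat. measure
            (coal_from_units (2*n+1) (t / real (2*n+1) powr (3/2)))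
            {x. \<bar>real (length x) / sqrt (real (2*n+1)) - 1 / t\<bar> > e'}) \<longlonglongrightarrow> 0"
    by (rule main_eps[OF assms e'(1,2)])
  have le: "measure (coal_from_units (2*n+1) (t / real (2*n+1) powr (3/2)))
            {x. \<bar>real (length x) / sqrt (real (2*n+1)) - 1 / t\<bar> > \<epsilon>}
         \<le> measure (coal_from_units (2*n+1) (t / real (2*n+1) powr (3/2)))
            {x. \<bar>real (length x) / sqrt (real (2*n+1)) - 1 / t\<bar> > e'}" for n
  proof -
    let ?M = "coal_from_units (2*n+1) (t / real (2*n+1) powr (3/2))"
    have sp: "?M \<in> space (subprob_algebra (count_space UNIV))"
      unfolding coal_from_units_def coal_law_def by (rule coal_space)
    have fm: "finite_measure ?M"
      unfolding coal_from_units_def coal_law_def by (rule subprob_fin)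
    have sets: "sets ?M = sets (count_space UNIV)" using sp by (simp add: space_subprob_algebra)
    show ?thesis
    proof (rule finite_measure.finite_measure_mono[OF fm])
      show "{x. \<bar>real (length x) / sqrt (real (2*n+1)) - 1 / t\<bar> > e'} \<in> sets ?M"
        unfolding sets by simp
    qed (use e' in auto)
  qed
  show "(\<lambda>n::nat. measure
            (coal_from_units (2*n+1) (t / real (2*n+1) powr (3/2)))
            {x. \<bar>real (length x) / sqrt (real (2*n+1)) - 1 / t\<bar> > \<epsilon>}) \<longlonglongrightarrow> 0"
  proof (rule tendsto_sandwich[OF _ _ tendsto_const lim])
    show "\<forall>\<^sub>F n in sequentially. 0 \<le> measure
            (coal_from_units (2*n+1) (t / real (2*n+1) powr (3/2)))
            {x. \<bar>real (length x) / sqrt (real (2*n+1)) - 1 / t\<bar> > \<epsilon>}"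
      by (intro always_eventually allI measure_nonneg)
    show "\<forall>\<^sub>F n in sequentially. measure
            (coal_from_units (2*n+1) (t / real (2*n+1) powr (3/2)))
            {x. \<bar>real (length x) / sqrt (real (2*n+1)) - 1 / t\<bar> > \<epsilon>} \<le> measure
            (coal_from_units (2*n+1) (t / real (2*n+1) powr (3/2)))
            {x. \<bar>real (length x) / sqrt (real (2*n+1)) - 1 / t\<bar> > e'}"
      by (intro always_eventually allI le)
  qed
qed

end
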